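(* There is a constant $c<\infty$ such that $\|\alpha_s\|^2_{L^2(\nu)}\le cs$ for all sufficiently small $s>0$.
   Context: Let $d\ge 2$, $\mathbb T$ the infinite $(d+1)$-regular tree rooted at $o$, $\bar o$ a fixed neighbour of $o$, $\mathbb T^+:=\{x:\bar o\text{ not on the geodesic from }o\text{ to }x\}$. Let $\phi$ be the Gaussian free field on $\mathbb T$ (centred Gaussian, covariance the Green function $g(x,y)=\frac1{d+1}\mathbb E_x[\sum_{k\ge0}1_{X_k=y}]$ of simple random walk), $P$ its law and $P_a:=P[\cdot\mid\phi_o=a]$ with expectation $E_a$ (equivalently, $\phi_o=a$ and $\phi_x=\frac1d\phi_{\bar x}+Y_x$ with $\bar x$ the parent of $x$ and $(Y_x)$ i.i.d. $\mathcal N(0,\frac{d+1}d)$). $\mathcal C_o^h$ is the connected component of $o$ in $\{x:\phi_x\ge h\}$, $h^*:=\inf\{h:P[|\mathcal C_o^h|=\infty]=0\}$. Let $\nu=\mathcal N(0,\frac d{d-1})$, $\rho_Y$ the density of $\mathcal N(0,\frac{d+1}d)$, and $L:=L_{h^*}$ on $L^2(\nu)$, $L[f](a)=1_{[h^*,\infty)}(a)\,d\int_{h^*}^\infty f(x)\rho_Y(x-\frac ad)dx$. It is known that $L$ is self-adjoint, nonnegative, Hilbert–Schmidt, with simple top eigenvalue $1$ and unique nonnegative unit-norm eigenfunction $\chi$, continuous, strictly positive on $[h^*,\infty)$ and zero on $(-\infty,h^* )$. Let $T:=|\mathcal C_o^{h^*}\cap\mathbb T^+|$, $\gamma_s(a):=1-E_a[e^{-sT}]$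 (a function of $a\in\mathbb R$ in $L^2(\nu)$), $a_1(s):=\langle\gamma_s,\chi\rangle_{L^2(\nu)}$ and $\alpha_s:=a_1(s)\chi$. *)

theory Defs
  imports "HOL-Probability.Probability"
begin

text \<open>Encoding of the (d+1)-regular tree rooted at o: a vertex is the REVERSED list of
  child indices along the geodesic from o (head = last step).  The first step from o
  (the last list element) lies in {0..d}, all later steps in {0..d-1}.  The fixed
  neighbour obar of o is the vertex [d].\<close>

definition is_vertex :: "nat \<Rightarrow> nat list \<Rightarrow> bool" where
  "is_vertex d xs = (\<forall>k<length xs. xs ! k < (if k = length xs - 1 then Suc d else d))"

text \<open>T^+ : vertices whose geodesic from o does not pass through obar = [d].\<close>
definition in_Tplus :: "nat \<Rightarrow> nat list \<Rightarrow> bool" where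
  "in_Tplus d xs = (is_vertex d xs \<and> (xs \<noteq> [] \<longrightarrow> last xs \<noteq> d))"

text \<open>Law of the increments Y_x ~ N(0,(d+1)/d) (normal_density takes the standard deviation).\<close>
definition Ylaw :: "nat \<Rightarrow> real measure" where
  "Ylaw d = density lborel (normal_density 0 (sqrt ((real d + 1) / real d)))"

text \<open>nu = N(0, d/(d-1)), the law of phi_o.\<close>
definition nu :: "nat \<Rightarrow> real measure" where
  "nu d = density lborel (normal_density 0 (sqrt (real d / (real d - 1))))"

definition Yfield :: "nat \<Rightarrow> (nat list \<Rightarrow> real) measure" where
  "Yfield d = (\<Pi>\<^sub>M x\<in>UNIV. Ylaw d)"

primrec phi :: "nat \<Rightarrow> real \<Rightarrow> (nat list \<Rightarrow> real) \<Rightarrow> nat list \<Rightarrow> real" where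
  "phi d a Y [] = a"
| "phi d a Y (i # xs) = phi d a Y xs / real d + Y (i # xs)"

text \<open>Connected component of o in {x. phi_x \<ge> h} (empty if phi_o < h).\<close>
definition cluster :: "nat \<Rightarrow> real \<Rightarrow> real \<Rightarrow> (nat list \<Rightarrow> real) \<Rightarrow> nat list set" where
  "cluster d h a Y = {x. is_vertex d x \<and> (\<forall>k\<le>length x. h \<le> phi d a Y (drop k x))}"

definition hstar :: "nat \<Rightarrow> real" where
  "hstar d = Inf {h. measure (nu d \<Otimes>\<^sub>M Yfield d)
                     {(a, Y). infinite (cluster d h a Y)} = 0}"

definition laplaceT :: "nat \<Rightarrow> real \<Rightarrow> real \<Rightarrow> real" where
  "laplaceT d s a = (\<integral>Y. (let C = cluster d (hstar d) a Y \<inter> {x. in_Tplus d x} in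
        if finite C then exp (- s * real (card C)) else 0) \<partial>Yfield d)"

definition gamma :: "nat \<Rightarrow> real \<Rightarrow> real \<Rightarrow> real" where
  "gamma d s a = 1 - laplaceT d s a"

definition rhoY :: "nat \<Rightarrow> real \<Rightarrow> real" where
  "rhoY d = normal_density 0 (sqrt ((real d + 1) / real d))"

definition Lop :: "nat \<Rightarrow> real \<Rightarrow> (real \<Rightarrow> real) \<Rightarrow> real \<Rightarrow> real" where
  "Lop d h f a = (if h \<le> a then real d * (LINT x:{h..}|lborel. f x * rhoY d (x - a / real d)) else 0)"

definition a1 :: "nat \<Rightarrow> (real \<Rightarrow> real) \<Rightarrow> real \<Rightarrow> real" where
  "a1 d ef s = (\<integral>a. gamma d s a * ef a \<partial>nu d)"

definition alpha :: "nat \<Rightarrow> (real \<Rightarrow> real) \<Rightarrow> real \<Rightarrow> real \<Rightarrow> real" where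
  "alpha d ef s a = a1 d ef s * ef a"

end

theory Submission
  imports Defs
begin


definition shift :: "nat \<Rightarrow> (nat list \<Rightarrow> real) \<Rightarrow> nat list \<Rightarrow> real" where
  "shift i Y = (\<lambda>zs. Y (zs @ [i]))"

lemma phi_append: "phi d a Y (ys @ [i]) = phi d (a / real d + Y [i]) (shift i Y) ys"
  by (induction ys) (auto simp: shift_def)

lemma phi_upd_nil: "phi d b (Y([] := c)) x = phi d b Y x"
  by (induction x) auto

lemma is_vertex_snoc: "is_vertex d (ys @ [i]) \<longleftrightarrow> (\<forall>j\<in>set ys. j < d) \<and> i < Suc d"
proof -
  have "is_vertex d (ys @ [i]) \<longleftrightarrow> (\<forall>k<length ys. ys ! k < d) \<and> i < Suc d"
    unfolding is_vertex_def
    by (auto simp: nth_append)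
  then show ?thesis by (simp add: all_set_conv_all_nth)
qed

lemma in_Tplus_iff: "in_Tplus d xs \<longleftrightarrow> (\<forall>j\<in>set xs. j < d)"
proof (cases xs rule: rev_cases)
  case Nil
  then show ?thesis by (simp add: in_Tplus_def is_vertex_def)
next
  case (snoc ys i)
  then show ?thesis by (auto simp: in_Tplus_def is_vertex_snoc)
qed

lemma in_Tplus_snoc: "in_Tplus d (ys @ [i]) \<longleftrightarrow> in_Tplus d ys \<and> i < d"
  by (auto simp: in_Tplus_iff)



definition CT :: "nat \<Rightarrow> real \<Rightarrow> real \<Rightarrow> (nat list \<Rightarrow> real) \<Rightarrow> nat list set" where
  "CT d h a Y = cluster d h a Y \<inter> {x. in_Tplus d x}"

definition Fv :: "nat \<Rightarrow> real \<Rightarrow> real \<Rightarrow> real \<Rightarrow> (nat list \<Rightarrow> real) \<Rightarrow> real" where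
  "Fv d h s a Y = (if finite (CT d h a Y) then exp (- s * real (card (CT d h a Y))) else 0)"

lemma in_Tplus_is_vertex: "in_Tplus d x \<Longrightarrow> is_vertex d x"
  by (simp add: in_Tplus_def)

lemma mem_CT: "x \<in> CT d h a Y \<longleftrightarrow> in_Tplus d x \<and> (\<forall>k\<le>length x. h \<le> phi d a Y (drop k x))"
  by (auto simp: CT_def cluster_def in_Tplus_def)

lemma mem_CT_nil: "[] \<in> CT d h a Y \<longleftrightarrow> h \<le> a"
  by (simp add: mem_CT in_Tplus_iff)

lemma mem_CT_snoc: "ys @ [i] \<in> CT d h a Y \<longleftrightarrow>
   i < d \<and> h \<le> a \<and> ys \<in> CT d h (a / real d + Y [i]) (shift i Y)"
proof -
  have "(\<forall>k\<le>length (ys @ [i]). h \<le> phi d a Y (drop k (ys @ [i]))) \<longleftrightarrow>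
        h \<le> a \<and> (\<forall>k\<le>length ys. h \<le> phi d (a / real d + Y [i]) (shift i Y) (drop k ys))"
  proof
    assume H: "\<forall>k\<le>length (ys @ [i]). h \<le> phi d a Y (drop k (ys @ [i]))"
    have "h \<le> a" using H[rule_format, of "Suc (length ys)"] by simp
    moreover have "h \<le> phi d (a / real d + Y [i]) (shift i Y) (drop k ys)" if "k \<le> length ys" for k
      using H[rule_format, of k] that by (simp add: phi_append)
    ultimately show "h \<le> a \<and> (\<forall>k\<le>length ys. h \<le> phi d (a / real d + Y [i]) (shift i Y) (drop k ys))"
      by blast
  next
    assume H: "h \<le> a \<and> (\<forall>k\<le>length ys. h \<le> phi d (a / real d + Y [i]) (shift i Y) (drop k ys))"
    show "\<forall>k\<le>length (ys @ [i]). h \<le> phi d a Y (drop k (ys @ [i]))"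
    proof (intro allI impI)
      fix k assume k: "k \<le> length (ys @ [i])"
      show "h \<le> phi d a Y (drop k (ys @ [i]))"
      proof (cases "k \<le> length ys")
        case True
        then show ?thesis using H by (simp add: phi_append)
      next
        case False
        then have "k = Suc (length ys)" using k by simp
        then show ?thesis using H by simp
      qed
    qed
  qed
  then show ?thesis unfolding mem_CT[of "ys @ [i]"] mem_CT[of ys] in_Tplus_snoc by blast
qed

lemma CT_low: assumes "\<not> h \<le> a" shows "CT d h a Y = {}"
proof -
  have "x \<notin> CT d h a Y" for x
  proof
    assume "x \<in> CT d h a Y"
    then have "h \<le> phi d a Y (drop (length x) x)" unfolding mem_CT by blast
    then show False using assms by simp
  qed
  then show ?thesis by blast
qed

lemma CT_decomp: "CT d h a Y = (if h \<le> a then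
   insert [] (\<Union>i\<in>{..<d}. (\<lambda>ys. ys @ [i]) ` CT d h (a / real d + Y [i]) (shift i Y)) else {})"
proof (cases "h \<le> a")
  case True
  have "x \<in> CT d h a Y \<longleftrightarrow> x \<in> insert [] (\<Union>i\<in>{..<d}. (\<lambda>ys. ys @ [i]) ` CT d h (a / real d + Y [i]) (shift i Y))" for x
  proof (cases x rule: rev_cases)
    case Nil then show ?thesis using True by (simp add: mem_CT_nil)
  next
    case (snoc ys i)
    have "ys @ [i] \<in> (\<Union>i\<in>{..<d}. (\<lambda>ys. ys @ [i]) ` CT d h (a / real d + Y [i]) (shift i Y))
       \<longleftrightarrow> i < d \<and> ys \<in> CT d h (a / real d + Y [i]) (shift i Y)" by auto
    then show ?thesis using True snoc by (simp add: mem_CT_snoc)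
  qed
  then have "CT d h a Y = insert [] (\<Union>i\<in>{..<d}. (\<lambda>ys. ys @ [i]) ` CT d h (a / real d + Y [i]) (shift i Y))"
    by (rule set_eqI)
  then show ?thesis using True by (simp only: if_True)
next
  case False
  then show ?thesis using CT_low[OF False] by simp
qed

lemma Fv_low: "\<not> h \<le> a \<Longrightarrow> Fv d h s a Y = 1"
  by (simp add: Fv_def CT_low)

lemma Fv_rec:
  assumes "h \<le> a"
  shows "Fv d h s a Y = exp (- s) * (\<Prod>i<d. Fv d h s (a / real d + Y [i]) (shift i Y))"
proof -
  define A where "A i = CT d h (a / real d + Y [i]) (shift i Y)" for i
  have C: "CT d h a Y = insert [] (\<Union>i\<in>{..<d}. (\<lambda>ys. ys @ [i]) ` A i)"
    using assms by (subst CT_decomp) (simp add: A_def)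
  have inj: "inj_on (\<lambda>ys. ys @ [i]) X" for i :: nat and X by (auto intro: inj_onI)
  have nn: "[] \<notin> (\<Union>i\<in>{..<d}. (\<lambda>ys. ys @ [i]) ` A i)" by auto
  have disj: "disjoint_family_on (\<lambda>i. (\<lambda>ys. ys @ [i]) ` A i) {..<d}"
    by (auto simp: disjoint_family_on_def)
  show ?thesis
  proof (cases "\<forall>i<d. finite (A i)")
    case True
    have fin: "finite (\<Union>i\<in>{..<d}. (\<lambda>ys. ys @ [i]) ` A i)" using True by auto
    have card: "card (CT d h a Y) = Suc (\<Sum>i<d. card (A i))"
      unfolding C using fin nn
      apply (simp add: card_insert_if)
      apply (subst card_UN_disjoint')
      using disj True apply (auto simp: card_image inj)
      done
    have "Fv d h s a Y = exp (- s * real (Suc (\<Sum>i<d. card (A i))))"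
      using fin C unfolding Fv_def card by (simp only: finite_insert if_True)
    also have "\<dots> = exp (- s) * (\<Prod>i<d. exp (- s * real (card (A i))))"
    proof -
      have "- s * real (Suc (\<Sum>i<d. card (A i))) = -s + (\<Sum>i<d. - s * real (card (A i)))"
        by (simp add: sum_distrib_left algebra_simps)
      then have "exp (- s * real (Suc (\<Sum>i<d. card (A i)))) = exp (-s) * exp (\<Sum>i<d. - s * real (card (A i)))"
        by (simp only: exp_add)
      also have "exp (\<Sum>i<d. - s * real (card (A i))) = (\<Prod>i<d. exp (- s * real (card (A i))))"
        by (rule exp_sum) simp
      finally show ?thesis .
    qed
    also have "\<dots> = exp (- s) * (\<Prod>i<d. Fv d h s (a / real d + Y [i]) (shift i Y))"
      using True by (simp add: Fv_def A_def)
    finally show ?thesis .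
  next
    case False
    then obtain j where j: "j < d" "infinite (A j)" by auto
    have "infinite (CT d h a Y)"
    proof
      assume "finite (CT d h a Y)"
      then have "finite ((\<lambda>ys. ys @ [j]) ` A j)" unfolding C
        by (rule finite_subset[rotated]) (use j in auto)
      then show False using j finite_imageD[OF _ inj] by blast
    qed
    moreover have "(\<Prod>i<d. Fv d h s (a / real d + Y [i]) (shift i Y)) = 0"
    proof (rule prod_zero)
      show "\<exists>i\<in>{..<d}. Fv d h s (a / real d + Y [i]) (shift i Y) = 0"
        using j by (intro bexI[of _ j]) (simp_all add: Fv_def A_def)
    qed simp
    ultimately show ?thesis unfolding Fv_def[of d h s a Y] by simp
  qed
qed

lemma Fv_upd_nil: "Fv d h s a (Y([] := c)) = Fv d h s a Y"
proof -
  have "CT d h a (Y([] := c)) = CT d h a Y" unfolding CT_def cluster_def phi_upd_nil ..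
  then show ?thesis by (simp add: Fv_def)
qed

lemma Fv_bounds: "s \<ge> 0 \<Longrightarrow> 0 \<le> Fv d h s a Y \<and> Fv d h s a Y \<le> 1"
  unfolding Fv_def by auto



lemma prob_Ylaw: "d \<ge> 1 \<Longrightarrow> prob_space (Ylaw d)"
  unfolding Ylaw_def by (rule prob_space_normal_density) simp

lemma prob_nu: "d \<ge> 2 \<Longrightarrow> prob_space (nu d)"
  unfolding nu_def by (rule prob_space_normal_density) simp

lemma sets_Ylaw[simp]: "sets (Ylaw d) = sets borel"
  by (simp add: Ylaw_def)

lemma space_Ylaw[simp]: "space (Ylaw d) = UNIV"
  by (simp add: Ylaw_def)

lemma prod_Yfield: "d \<ge> 1 \<Longrightarrow> product_prob_space (\<lambda>_. Ylaw d)"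
  unfolding product_prob_space_def product_prob_space_axioms_def product_sigma_finite_def
  using prob_Ylaw[of d] by (auto simp: prob_space_imp_sigma_finite)

lemma prob_Yfield: "d \<ge> 1 \<Longrightarrow> prob_space (Yfield d)"
  unfolding Yfield_def by (rule prob_space_PiM) (rule prob_Ylaw)

lemma space_Yfield[simp]: "space (Yfield d) = UNIV"
  by (simp add: Yfield_def space_PiM)

lemma meas_coord[measurable]: "(\<lambda>Y. Y j) \<in> borel_measurable (Yfield d)"
proof -
  have "(\<lambda>Y. Y j) \<in> measurable (Yfield d) (Ylaw d)"
    unfolding Yfield_def by (rule measurable_component_singleton) simp
  moreover have "measurable (Yfield d) (Ylaw d) = measurable (Yfield d) borel"
    by (rule measurable_cong_sets) simp_all
  ultimately show ?thesis by simp
qed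

lemma meas_phi[measurable]: "(\<lambda>p. phi d (fst p) (snd p) x) \<in> borel_measurable (borel \<Otimes>\<^sub>M Yfield d)"
proof (induction x)
  case Nil
  then show ?case by simp
next
  case (Cons i xs)
  have "(\<lambda>p. snd p (i # xs)) \<in> borel_measurable (borel \<Otimes>\<^sub>M Yfield d)"
    by measurable
  with Cons show ?case by simp
qed

definition Vn :: "nat \<Rightarrow> nat \<Rightarrow> nat list set" where
  "Vn d n = {x. in_Tplus d x \<and> length x \<le> n}"

lemma finite_Vn: "finite (Vn d n)"
proof -
  have "Vn d n \<subseteq> {xs. set xs \<subseteq> {..<d} \<and> length xs \<le> n}"
    by (auto simp: Vn_def in_Tplus_iff)
  then show ?thesis by (rule finite_subset) (rule finite_lists_length_le, simp)
qed

lemma meas_memCT[measurable]: "Measurable.pred (borel \<Otimes>\<^sub>M Yfield d) (\<lambda>p. x \<in> CT d h (fst p) (snd p))"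
  unfolding mem_CT by measurable

lemma card_CT_Vn: "card (CT d h a Y \<inter> Vn d n) = (\<Sum>x\<in>Vn d n. if x \<in> CT d h a Y then 1 else 0)"
proof -
  have "card (Vn d n \<inter> CT d h a Y) = (\<Sum>x\<in>Vn d n \<inter> CT d h a Y. 1)" by simp
  also have "\<dots> = (\<Sum>x\<in>Vn d n. if x \<in> CT d h a Y then 1 else 0)"
    by (rule sum.inter_restrict) (rule finite_Vn)
  finally show ?thesis by (simp add: Int_commute)
qed

lemma Fv_limit:
  assumes s: "s > 0"
  shows "(\<lambda>n. exp (- s * real (card (CT d h a Y \<inter> Vn d n)))) \<longlonglongrightarrow> Fv d h s a Y"
proof (cases "finite (CT d h a Y)")
  case True
  define N where "N = Max (insert 0 (length ` CT d h a Y))"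
  have "CT d h a Y \<subseteq> Vn d n" if "N \<le> n" for n
  proof
    fix x assume x: "x \<in> CT d h a Y"
    then have "length x \<le> N" unfolding N_def using True by (intro Max_ge) auto
    then show "x \<in> Vn d n" using x that by (auto simp: Vn_def mem_CT)
  qed
  then have "\<forall>n\<ge>N. exp (- s * real (card (CT d h a Y \<inter> Vn d n))) = Fv d h s a Y"
    using True unfolding Fv_def by (simp add: Int_absorb2)
  then have "eventually (\<lambda>n. exp (- s * real (card (CT d h a Y \<inter> Vn d n))) = Fv d h s a Y) sequentially"
    unfolding eventually_sequentially by blast
  then show ?thesis by (rule tendsto_eventually)
next
  case False
  have at: "filterlim (\<lambda>n. real (card (CT d h a Y \<inter> Vn d n))) at_top sequentially"
  proof (subst filterlim_at_top, intro allI)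
    fix Z :: real
    obtain B where B: "finite B" "card B = nat \<lceil>Z\<rceil>" "B \<subseteq> CT d h a Y"
      using infinite_arbitrarily_large[OF False] by blast
    define N where "N = Max (insert 0 (length ` B))"
    have "Z \<le> real (card (CT d h a Y \<inter> Vn d n))" if "N \<le> n" for n
    proof -
      have "B \<subseteq> CT d h a Y \<inter> Vn d n"
      proof
        fix x assume x: "x \<in> B"
        then have "length x \<le> N" unfolding N_def using B by (intro Max_ge) auto
        then show "x \<in> CT d h a Y \<inter> Vn d n" using x B that by (auto simp: Vn_def mem_CT)
      qed
      then have "card B \<le> card (CT d h a Y \<inter> Vn d n)"
        by (rule card_mono[rotated]) (simp add: finite_Vn)
      then show ?thesis using B(2) by linarith
    qed
    then show "eventually (\<lambda>n. Z \<le> real (card (CT d h a Y \<inter> Vn d n))) sequentially"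
      unfolding eventually_sequentially by blast
  qed
  have "filterlim (\<lambda>n. - s * real (card (CT d h a Y \<inter> Vn d n))) at_bot sequentially"
    unfolding filterlim_uminus_at_bot using filterlim_tendsto_pos_mult_at_top[OF tendsto_const s at]
    by simp
  then have "(\<lambda>n. exp (- s * real (card (CT d h a Y \<inter> Vn d n)))) \<longlonglongrightarrow> 0"
    by (rule filterlim_compose[OF exp_at_bot])
  then show ?thesis using False by (simp add: Fv_def)
qed

lemma meas_Fv[measurable]:
  assumes s: "s > 0"
  shows "(\<lambda>p. Fv d h s (fst p) (snd p)) \<in> borel_measurable (borel \<Otimes>\<^sub>M Yfield d)"
proof (rule borel_measurable_LIMSEQ_real)
  fix p show "(\<lambda>n. exp (- s * real (card (CT d h (fst p) (snd p) \<inter> Vn d n)))) \<longlonglongrightarrow> Fv d h s (fst p) (snd p)"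
    by (rule Fv_limit[OF s])
next
  fix n
  show "(\<lambda>p. exp (- s * real (card (CT d h (fst p) (snd p) \<inter> Vn d n)))) \<in> borel_measurable (borel \<Otimes>\<^sub>M Yfield d)"
    unfolding card_CT_Vn by measurable
qed



definition Hf :: "nat \<Rightarrow> real \<Rightarrow> real \<Rightarrow> real \<Rightarrow> (nat list \<Rightarrow> real) \<Rightarrow> real" where
  "Hf d h s a Z = Fv d h s (a / real d + Z []) Z"

lemma meas_Fv_comp:
  assumes s: "s > 0" and f: "f \<in> borel_measurable M" and g: "g \<in> measurable M (Yfield d)"
  shows "(\<lambda>x. Fv d h s (f x) (g x)) \<in> borel_measurable M"
proof -
  have "(\<lambda>x. (f x, g x)) \<in> measurable M (borel \<Otimes>\<^sub>M Yfield d)"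
    using f g by (rule measurable_Pair)
  from measurable_compose[OF this meas_Fv[OF s]] show ?thesis by simp
qed

lemma meas_Fv_b: "s > 0 \<Longrightarrow> Fv d h s b \<in> borel_measurable (Yfield d)"
  using meas_Fv_comp[of s "\<lambda>_. b" "Yfield d" "\<lambda>Y. Y"] by simp

lemma meas_Hf: "s > 0 \<Longrightarrow> Hf d h s a \<in> borel_measurable (Yfield d)"
  unfolding Hf_def by (rule meas_Fv_comp) auto

lemma Fv_abs_le: "s > 0 \<Longrightarrow> norm (Fv d h s b Y) \<le> 1"
  using Fv_bounds[of s d h b Y] by simp

lemma meas_Yfield_comp:
  assumes "\<And>x. (\<lambda>w. f w x) \<in> borel_measurable M"
  shows "f \<in> measurable M (Yfield d)"
proof -
  have "(\<lambda>w. \<lambda>x. f w x) \<in> measurable M (Pi\<^sub>M UNIV (\<lambda>_. Ylaw d))"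
  proof (rule measurable_PiM_single')
    fix x :: "nat list"
    have "measurable M (Ylaw d) = measurable M borel" by (rule measurable_cong_sets) simp_all
    then show "(\<lambda>w. f w x) \<in> measurable M (Ylaw d)" using assms by simp
  qed simp
  then show ?thesis by (simp add: Yfield_def)
qed

lemma meas_shift: "shift i \<in> measurable (Yfield d) (Yfield d)"
  unfolding shift_def by (rule meas_Yfield_comp) simp

lemma distr_shift:
  assumes d1: "d \<ge> 1"
  shows "distr (Yfield d) (Yfield d) (shift i) = Yfield d"
proof -
  have "distr (Pi\<^sub>M UNIV (\<lambda>_. Ylaw d)) (\<Pi>\<^sub>M n\<in>UNIV. Ylaw d) (\<lambda>\<omega>. \<lambda>n\<in>UNIV. \<omega> (n @ [i])) = (\<Pi>\<^sub>M n\<in>UNIV. Ylaw d)"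
    using distr_PiM_reindex[of UNIV "\<lambda>_. Ylaw d" "\<lambda>ys. ys @ [i]" UNIV] prob_Ylaw[OF d1]
    by (simp add: inj_on_def)
  moreover have "(\<lambda>\<omega>. \<lambda>n\<in>UNIV. \<omega> (n @ [i])) = shift i"
    by (intro ext) (simp add: shift_def)
  ultimately show ?thesis by (simp add: Yfield_def)
qed

lemma indep_coord:
  assumes d1: "d \<ge> 1"
  shows "prob_space.indep_vars (Yfield d) (\<lambda>_. Ylaw d) (\<lambda>x Y. Y x) UNIV"
proof -
  interpret P: prob_space "Yfield d" by (rule prob_Yfield[OF d1])
  have rv0: "(\<lambda>Y. Y i) \<in> measurable (Pi\<^sub>M UNIV (\<lambda>_. Ylaw d)) (Ylaw d)" for i
    by (rule measurable_component_singleton) simp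
  have rv: "P.random_variable (Ylaw d) (\<lambda>Y. Y i)" for i
    using rv0[of i] by (simp add: Yfield_def)
  have "distr (Yfield d) (Pi\<^sub>M UNIV (\<lambda>i. Ylaw d)) (\<lambda>Y. \<lambda>i\<in>UNIV. Y i) = Yfield d"
    by (simp add: restrict_UNIV Yfield_def[symmetric])
  moreover have "distr (Yfield d) (Ylaw d) (\<lambda>Y. Y i) = Ylaw d" for i
    unfolding Yfield_def by (rule distr_PiM_component) (simp_all add: prob_Ylaw[OF d1])
  ultimately have "distr (Yfield d) (Pi\<^sub>M UNIV (\<lambda>i. Ylaw d)) (\<lambda>Y. \<lambda>i\<in>UNIV. Y i) =
      Pi\<^sub>M UNIV (\<lambda>i. distr (Yfield d) (Ylaw d) (\<lambda>Y. Y i))"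
    by (simp add: Yfield_def)
  then show ?thesis
    by (subst P.indep_vars_iff_distr_eq_PiM) (simp_all add: rv)
qed

lemma indep_shift:
  assumes d1: "d \<ge> 1" and s: "s > 0"
  shows "prob_space.indep_vars (Yfield d) (\<lambda>_. borel) (\<lambda>i Y. Hf d h s a (shift i Y)) {..<d}"
proof -
  interpret P: prob_space "Yfield d" by (rule prob_Yfield[OF d1])
  define K where "K i = range (\<lambda>ys. ys @ [i])" for i :: nat
  have disj: "disjoint_family_on K {..<d}"
    by (auto simp: disjoint_family_on_def K_def)
  have ind: "P.indep_vars (\<lambda>j. Pi\<^sub>M (K j) (\<lambda>_. Ylaw d)) (\<lambda>j \<omega>. restrict (\<lambda>i. \<omega> i) (K j)) {..<d}"
    by (rule P.indep_vars_restrict[OF indep_coord[OF d1]]) (simp_all add: disj)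
  have m: "(\<lambda>Z. Hf d h s a (\<lambda>ys. Z (ys @ [j]))) \<in> borel_measurable (Pi\<^sub>M (K j) (\<lambda>_. Ylaw d))" for j
  proof -
    have "(\<lambda>Z. \<lambda>ys. Z (ys @ [j])) \<in> measurable (Pi\<^sub>M (K j) (\<lambda>_. Ylaw d)) (Yfield d)"
    proof (rule meas_Yfield_comp)
      fix ys
      have "(\<lambda>Z. Z (ys @ [j])) \<in> measurable (Pi\<^sub>M (K j) (\<lambda>_. Ylaw d)) (Ylaw d)"
        by (rule measurable_component_singleton) (simp add: K_def)
      moreover have "measurable (Pi\<^sub>M (K j) (\<lambda>_. Ylaw d)) (Ylaw d) = measurable (Pi\<^sub>M (K j) (\<lambda>_. Ylaw d)) borel"
        by (rule measurable_cong_sets) simp_all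
      ultimately show "(\<lambda>Z. Z (ys @ [j])) \<in> borel_measurable (Pi\<^sub>M (K j) (\<lambda>_. Ylaw d))" by simp
    qed
    from measurable_compose[OF this meas_Hf[OF s]] show ?thesis by simp
  qed
  have "P.indep_vars (\<lambda>_. borel) (\<lambda>j \<omega>. Hf d h s a (\<lambda>ys. restrict (\<lambda>i. \<omega> i) (K j) (ys @ [j]))) {..<d}"
    by (rule P.indep_vars_compose2[OF ind m])
  moreover have "(\<lambda>ys. restrict (\<lambda>i. \<omega> i) (K j) (ys @ [j])) = shift j \<omega>" for j \<omega>
    by (auto simp: K_def shift_def)
  ultimately show ?thesis by simp
qed

lemma integral_Fv_rec:
  assumes d1: "d \<ge> 1" and s: "s > 0" and ha: "h \<le> a"
  shows "(\<integral>Y. Fv d h s a Y \<partial>Yfield d) = exp (- s) * (\<integral>Z. Hf d h s a Z \<partial>Yfield d) ^ d"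
proof -
  interpret P: prob_space "Yfield d" by (rule prob_Yfield[OF d1])
  have eq: "Fv d h s a Y = exp (- s) * (\<Prod>i<d. Hf d h s a (shift i Y))" for Y
    using Fv_rec[OF ha, of d s Y] by (simp add: Hf_def shift_def)
  have int: "integrable (Yfield d) (\<lambda>Y. Hf d h s a (shift i Y))" for i
  proof (rule P.integrable_const_bound[where B=1])
    show "AE x in Yfield d. norm (Hf d h s a (shift i x)) \<le> 1"
      using Fv_abs_le[OF s] by (simp add: Hf_def)
    show "(\<lambda>Y. Hf d h s a (shift i Y)) \<in> borel_measurable (Yfield d)"
      using measurable_compose[OF meas_shift meas_Hf[OF s]] by simp
  qed
  have "(\<integral>Y. Fv d h s a Y \<partial>Yfield d) = exp (- s) * (\<integral>Y. (\<Prod>i<d. Hf d h s a (shift i Y)) \<partial>Yfield d)"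
    unfolding eq by simp
  also have "(\<integral>Y. (\<Prod>i<d. Hf d h s a (shift i Y)) \<partial>Yfield d) = (\<Prod>i<d. \<integral>Y. Hf d h s a (shift i Y) \<partial>Yfield d)"
    by (rule P.indep_vars_lebesgue_integral) (simp_all add: indep_shift[OF d1 s] int)
  also have "\<dots> = (\<Prod>i<d. (\<integral>Z. Hf d h s a Z \<partial>Yfield d))"
  proof (intro prod.cong refl)
    fix i
    have "(\<integral>Z. Hf d h s a Z \<partial>Yfield d) = (\<integral>Z. Hf d h s a Z \<partial>distr (Yfield d) (Yfield d) (shift i))"
      by (simp add: distr_shift[OF d1])
    also have "\<dots> = (\<integral>Y. Hf d h s a (shift i Y) \<partial>Yfield d)"
      by (rule integral_distr[OF meas_shift meas_Hf[OF s]])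
    finally show "(\<integral>Y. Hf d h s a (shift i Y) \<partial>Yfield d) = (\<integral>Z. Hf d h s a Z \<partial>Yfield d)" by simp
  qed
  finally show ?thesis by simp
qed



lemma Yfield_UNIV: "d \<ge> 1 \<Longrightarrow> measure (Yfield d) UNIV = 1"
  using prob_space.prob_space[OF prob_Yfield] by simp

lemma Ylaw_UNIV: "d \<ge> 1 \<Longrightarrow> measure (Ylaw d) UNIV = 1"
  using prob_space.prob_space[OF prob_Ylaw] by simp

lemma Fv_abs_le2: "s > 0 \<Longrightarrow> \<bar>Fv d h s b Y\<bar> \<le> 1"
  using Fv_abs_le[of s d h b Y] by simp

lemma integral_split_nil:
  fixes G :: "(nat list \<Rightarrow> real) \<Rightarrow> real"
  assumes d1: "d \<ge> 1" and G: "G \<in> borel_measurable (Yfield d)" and B: "\<And>Y. \<bar>G Y\<bar> \<le> B"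
  shows "(\<integral>Y. G Y \<partial>Yfield d) =
    (\<integral>y. (\<integral>X. G (X([] := y)) \<partial>Pi\<^sub>M (UNIV - {[]}) (\<lambda>_. Ylaw d)) \<partial>Ylaw d)"
proof -
  let ?Q = "Pi\<^sub>M (UNIV - {[]}) (\<lambda>_. Ylaw d)"
  interpret Y: prob_space "Ylaw d" by (rule prob_Ylaw[OF d1])
  interpret Q: prob_space ?Q by (rule prob_space_PiM) (rule prob_Ylaw[OF d1])
  interpret PQ: pair_prob_space "Ylaw d" ?Q ..
  have g: "(\<lambda>p. (snd p)([] := fst p)) \<in> measurable (Ylaw d \<Otimes>\<^sub>M ?Q) (Yfield d)"
    unfolding Yfield_def by (rule measurable_fun_upd[where J="UNIV - {[]}"]) auto
  have ins: "insert [] (UNIV - {[]}) = (UNIV :: nat list set)" by auto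
  have D: "distr (Ylaw d \<Otimes>\<^sub>M ?Q) (Yfield d) (\<lambda>(x, X). X([] := x)) = Yfield d"
    using distr_pair_PiM_eq_PiM[of "UNIV - {[]}" "\<lambda>_. Ylaw d" "[]"] prob_Ylaw[OF d1]
    unfolding ins by (simp add: Yfield_def)
  have cp: "(\<lambda>(x, X). X([] := x)) = (\<lambda>p. (snd p)([] := fst p))"
    by (simp add: split_beta')
  have "(\<integral>Y. G Y \<partial>Yfield d) = (\<integral>Y. G Y \<partial>distr (Ylaw d \<Otimes>\<^sub>M ?Q) (Yfield d) (\<lambda>p. (snd p)([] := fst p)))"
    using D unfolding cp by simp
  also have "\<dots> = (\<integral>p. G ((snd p)([] := fst p)) \<partial>(Ylaw d \<Otimes>\<^sub>M ?Q))"
    by (rule integral_distr[OF g G])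
  also have "\<dots> = (\<integral>y. (\<integral>X. G (X([] := y)) \<partial>?Q) \<partial>Ylaw d)"
  proof -
    have "integrable (Ylaw d \<Otimes>\<^sub>M ?Q) (\<lambda>p. G ((snd p)([] := fst p)))"
      by (rule PQ.P.integrable_const_bound[where B=B]) (use B in \<open>simp_all add: measurable_compose[OF g G]\<close>)
    from PQ.integral_fst'[OF this] show ?thesis by simp
  qed
  finally show ?thesis .
qed

lemma Hf_integral:
  assumes d1: "d \<ge> 1" and s: "s > 0"
  shows "(\<integral>Z. Hf d h s a Z \<partial>Yfield d) = (\<integral>y. (\<integral>Y. Fv d h s (a / real d + y) Y \<partial>Yfield d) \<partial>Ylaw d)"
proof -
  let ?Q = "Pi\<^sub>M (UNIV - {[]}) (\<lambda>_. Ylaw d)"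
  interpret Y: prob_space "Ylaw d" by (rule prob_Ylaw[OF d1])
  have 1: "(\<integral>Z. Hf d h s a Z \<partial>Yfield d) = (\<integral>y. (\<integral>X. Hf d h s a (X([] := y)) \<partial>?Q) \<partial>Ylaw d)"
    by (rule integral_split_nil[OF d1 meas_Hf[OF s], where B=1]) (simp add: Hf_def Fv_abs_le2[OF s])
  have 2: "Hf d h s a (X([] := y)) = Fv d h s (a / real d + y) X" for X y
    by (simp add: Hf_def Fv_upd_nil)
  have 3: "(\<integral>Y. Fv d h s b Y \<partial>Yfield d) = (\<integral>X. Fv d h s b X \<partial>?Q)" for b
  proof -
    have "(\<integral>Y. Fv d h s b Y \<partial>Yfield d) = (\<integral>y. (\<integral>X. Fv d h s b (X([] := y)) \<partial>?Q) \<partial>Ylaw d)"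
      by (rule integral_split_nil[OF d1 meas_Fv_b[OF s], where B=1]) (simp add: Fv_abs_le2[OF s])
    also have "\<dots> = (\<integral>y. (\<integral>X. Fv d h s b X \<partial>?Q) \<partial>Ylaw d)"
      by (simp add: Fv_upd_nil)
    also have "\<dots> = (\<integral>X. Fv d h s b X \<partial>?Q)"
      by (simp add: Ylaw_UNIV[OF d1])
    finally show ?thesis .
  qed
  show ?thesis unfolding 1 2 3 ..
qed

lemma laplaceT_eq: "laplaceT d s b = (\<integral>Y. Fv d (hstar d) s b Y \<partial>Yfield d)"
  unfolding laplaceT_def Fv_def CT_def Let_def by simp

lemma meas_LT:
  assumes d1: "d \<ge> 1" and s: "s > 0"
  shows "(\<lambda>b. \<integral>Y. Fv d h s b Y \<partial>Yfield d) \<in> borel_measurable borel"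
proof -
  interpret P: prob_space "Yfield d" by (rule prob_Yfield[OF d1])
  show ?thesis
    by (rule P.borel_measurable_lebesgue_integral) (simp add: split_beta' meas_Fv[OF s])
qed

lemma LT_bounds:
  assumes d1: "d \<ge> 1" and s: "s > 0"
  shows "0 \<le> (\<integral>Y. Fv d h s b Y \<partial>Yfield d) \<and> (\<integral>Y. Fv d h s b Y \<partial>Yfield d) \<le> 1"
proof -
  interpret P: prob_space "Yfield d" by (rule prob_Yfield[OF d1])
  have "(\<integral>Y. Fv d h s b Y \<partial>Yfield d) \<le> (\<integral>Y. 1 \<partial>Yfield d)"
    by (rule integral_mono) (auto intro!: P.integrable_const_bound[where B=1] meas_Fv_b[OF s]
        simp: Fv_abs_le[OF s] Fv_bounds[OF less_imp_le[OF s]])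
  moreover have "0 \<le> (\<integral>Y. Fv d h s b Y \<partial>Yfield d)"
    by (rule integral_nonneg_AE) (simp add: Fv_bounds[OF less_imp_le[OF s]])
  ultimately show ?thesis by (simp add: Yfield_UNIV[OF d1])
qed

lemma LT_low:
  assumes d1: "d \<ge> 1" and "b < h"
  shows "(\<integral>Y. Fv d h s b Y \<partial>Yfield d) = 1"
proof -
  interpret P: prob_space "Yfield d" by (rule prob_Yfield[OF d1])
  show ?thesis using assms by (simp add: Fv_low Yfield_UNIV[OF d1])
qed

lemma LT_rec:
  assumes d1: "d \<ge> 1" and s: "s > 0" and ha: "h \<le> a"
  shows "(\<integral>Y. Fv d h s a Y \<partial>Yfield d) =
     exp (- s) * (\<integral>y. (\<integral>Y. Fv d h s (a / real d + y) Y \<partial>Yfield d) \<partial>Ylaw d) ^ d"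
  using integral_Fv_rec[OF d1 s ha] Hf_integral[OF d1 s] by simp



definition nd :: "nat \<Rightarrow> real \<Rightarrow> real" where
  "nd d = normal_density 0 (sqrt (real d / (real d - 1)))"

definition Kop :: "nat \<Rightarrow> real \<Rightarrow> (real \<Rightarrow> real) \<Rightarrow> real \<Rightarrow> ennreal" where
  "Kop d h f a = (\<integral>\<^sup>+x. ennreal (indicator {h..} x * f x * rhoY d (x - a / real d)) \<partial>lborel)"

lemma nu_nd: "nu d = density lborel (\<lambda>x. ennreal (nd d x))"
  by (simp add: nu_def nd_def)

lemma meas_nd[measurable]: "nd d \<in> borel_measurable borel"
  by (simp add: nd_def)

lemma meas_rhoY[measurable]: "rhoY d \<in> borel_measurable borel"
  by (simp add: rhoY_def)

lemma nd_pos: "d \<ge> 2 \<Longrightarrow> 0 < nd d x"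
  unfolding nd_def by (rule normal_density_pos) simp

lemma rhoY_nonneg[simp]: "0 \<le> rhoY d x"
  by (simp add: rhoY_def)

lemma nd_nonneg[simp]: "0 \<le> nd d x"
  by (simp add: nd_def)

lemma gauss_sym:
  assumes d2: "d \<ge> 2"
  shows "nd d a * rhoY d (x - a / real d) = nd d x * rhoY d (a - x / real d)"
proof -
  have d: "real d \<ge> 2" using d2 by simp
  have s1: "(sqrt (real d / (real d - 1)))\<^sup>2 = real d / (real d - 1)" using d by simp
  have s2: "(sqrt ((real d + 1) / real d))\<^sup>2 = (real d + 1) / real d" using d by simp
  have e: "- a\<^sup>2 / (2 * (real d / (real d - 1))) + - (x - a / real d)\<^sup>2 / (2 * ((real d + 1) / real d)) =
        - x\<^sup>2 / (2 * (real d / (real d - 1))) + - (a - x / real d)\<^sup>2 / (2 * ((real d + 1) / real d))"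
  proof -
    define D where "D = real d"
    have D: "D \<ge> 2" using d by (simp add: D_def)
    have h1: "z\<^sup>2 / (2 * (D / (D - 1))) = z\<^sup>2 * (D - 1) / (2 * D)" for z
      using D by (simp add: field_simps)
    have h2: "(z - w / D)\<^sup>2 / (2 * ((D + 1) / D)) = (D * z - w)\<^sup>2 / (2 * D * (D + 1))" for z w
    proof -
      have "z - w / D = (D * z - w) / D" using D by (simp add: field_simps)
      then have "(z - w / D)\<^sup>2 = (D * z - w)\<^sup>2 / D\<^sup>2" by (simp add: power_divide)
      moreover have "q / D\<^sup>2 / (2 * ((D + 1) / D)) = q / (2 * D * (D + 1))" for q
        using D by (simp add: field_simps power2_eq_square)
      ultimately show ?thesis by simp
    qed
    have h3: "z\<^sup>2 * (D - 1) / (2 * D) + (D * w - z)\<^sup>2 / (2 * D * (D + 1)) =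
        (D\<^sup>2 * (z\<^sup>2 + w\<^sup>2) - 2 * D * z * w) / (2 * D * (D + 1))" for z w
    proof -
      have D1: "D + 1 \<noteq> 0" using D by simp
      have eqA: "z\<^sup>2 * (D - 1) * (D + 1) / (2 * D * (D + 1)) = z\<^sup>2 * (D - 1) / (2 * D)"
        using D1 by (rule mult_divide_mult_cancel_right)
      then have "z\<^sup>2 * (D - 1) / (2 * D) + (D * w - z)\<^sup>2 / (2 * D * (D + 1)) =
          (z\<^sup>2 * (D - 1) * (D + 1) + (D * w - z)\<^sup>2) / (2 * D * (D + 1))"
        using eqA[symmetric] by (simp add: add_divide_distrib)
      also have "z\<^sup>2 * (D - 1) * (D + 1) + (D * w - z)\<^sup>2 = D\<^sup>2 * (z\<^sup>2 + w\<^sup>2) - 2 * D * z * w"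
        by (simp add: power2_eq_square algebra_simps)
      finally show ?thesis .
    qed
    have "- a\<^sup>2 / (2 * (D / (D - 1))) + - (x - a / D)\<^sup>2 / (2 * ((D + 1) / D)) =
        - (a\<^sup>2 / (2 * (D / (D - 1))) + (x - a / D)\<^sup>2 / (2 * ((D + 1) / D)))" by simp
    also have "\<dots> = - ((D\<^sup>2 * (a\<^sup>2 + x\<^sup>2) - 2 * D * a * x) / (2 * D * (D + 1)))"
      unfolding h1 h2 h3 ..
    also have "\<dots> = - (x\<^sup>2 / (2 * (D / (D - 1))) + (a - x / D)\<^sup>2 / (2 * ((D + 1) / D)))"
      unfolding h1 h2 h3 by (simp add: algebra_simps)
    also have "\<dots> = - x\<^sup>2 / (2 * (D / (D - 1))) + - (a - x / D)\<^sup>2 / (2 * ((D + 1) / D))" by simp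
    finally show ?thesis unfolding D_def .
  qed
  have "nd d a * rhoY d (x - a / real d) =
     1 / sqrt (2 * pi * (real d / (real d - 1))) * (1 / sqrt (2 * pi * ((real d + 1) / real d))) *
     exp (- a\<^sup>2 / (2 * (real d / (real d - 1))) + - (x - a / real d)\<^sup>2 / (2 * ((real d + 1) / real d)))"
    unfolding nd_def rhoY_def normal_density_def s1 s2 exp_add by simp
  also have "\<dots> = nd d x * rhoY d (a - x / real d)"
    unfolding e nd_def rhoY_def normal_density_def s1 s2 exp_add by simp
  finally show ?thesis .
qed

lemma Lop_K:
  assumes f: "f \<in> borel_measurable borel" and nn: "\<And>x. 0 \<le> f x"
  shows "Lop d h f a = (if h \<le> a then real d * enn2real (Kop d h f a) else 0)"
proof -
  have "(LINT x:{h..}|lborel. f x * rhoY d (x - a / real d)) =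
        (\<integral>x. indicator {h..} x * f x * rhoY d (x - a / real d) \<partial>lborel)"
    unfolding set_lebesgue_integral_def by (simp add: mult.assoc)
  also have "\<dots> = enn2real (Kop d h f a)"
    unfolding Kop_def
  proof (rule integral_eq_nn_integral)
    have "(\<lambda>x. indicator {h..} x * f x * rhoY d (x - a / real d)) \<in> borel_measurable borel"
      using f by measurable
    then show "(\<lambda>x. indicator {h..} x * f x * rhoY d (x - a / real d)) \<in> borel_measurable lborel"
      by simp
    show "AE x in lborel. 0 \<le> indicator {h..} x * f x * rhoY d (x - a / real d)"
      using nn by (simp add: indicator_def)
  qed
  finally show ?thesis by (simp add: Lop_def)
qed

lemma e2ennreal_one: "e2ennreal 1 = 1"
  by (metis e2ennreal_ereal ennreal_1 one_ereal_def)

lemma int_rhoY: "d \<ge> 1 \<Longrightarrow> (\<integral>\<^sup>+x. ennreal (rhoY d x) \<partial>lborel) = 1"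
proof -
  assume d1: "d \<ge> 1"
  interpret Y: prob_space "Ylaw d" by (rule prob_Ylaw[OF d1])
  have "emeasure (Ylaw d) UNIV = 1" using Y.emeasure_space_1 by simp
  then show ?thesis by (simp add: Ylaw_def rhoY_def emeasure_density)
qed

lemma int_rhoY_shift: "d \<ge> 1 \<Longrightarrow> (\<integral>\<^sup>+x. ennreal (rhoY d (x - t)) \<partial>lborel) = 1"
proof -
  assume d1: "d \<ge> 1"
  have "(\<integral>\<^sup>+x. ennreal (rhoY d (x - t)) \<partial>lborel) = (\<integral>\<^sup>+x. ennreal (rhoY d (x - t)) \<partial>distr lborel borel ((+) t))"
    by (simp add: lborel_distr_plus)
  also have "\<dots> = (\<integral>\<^sup>+x. ennreal (rhoY d (t + x - t)) \<partial>lborel)"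
    by (subst nn_integral_distr) auto
  also have "\<dots> = 1" using int_rhoY[OF d1] by simp
  finally show ?thesis .
qed

lemma Kop_le1:
  assumes d1: "d \<ge> 1" and f: "\<And>x. f x \<le> 1" "\<And>x. 0 \<le> f x"
  shows "Kop d h f a \<le> 1"
proof -
  have "Kop d h f a \<le> (\<integral>\<^sup>+x. ennreal (rhoY d (x - a / real d)) \<partial>lborel)"
    unfolding Kop_def
  proof (rule nn_integral_mono)
    fix x
    have "indicator {h..} x * f x \<le> 1" using f[of x] by (simp add: indicator_def)
    then have "indicator {h..} x * f x * rhoY d (x - a / real d) \<le> 1 * rhoY d (x - a / real d)"
      by (rule mult_right_mono) simp
    then show "ennreal (indicator {h..} x * f x * rhoY d (x - a / real d)) \<le> ennreal (rhoY d (x - a / real d))"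
      by (intro ennreal_leI) simp
  qed
  then show ?thesis using int_rhoY_shift[OF d1] by simp
qed

lemma sets_lborel_pair: "sets (lborel \<Otimes>\<^sub>M lborel) = sets (borel \<Otimes>\<^sub>M (borel :: real measure))"
  by (intro sets_pair_measure_cong) simp_all

lemma tonelli_sym:
  assumes d2: "d \<ge> 2"
  assumes f[measurable]: "f \<in> borel_measurable borel" and g[measurable]: "g \<in> borel_measurable borel"
    and fn: "\<And>x. 0 \<le> f x" and gn: "\<And>x. 0 \<le> g x"
  shows "(\<integral>\<^sup>+a. ennreal (nd d a * indicator {h..} a * g a) * Kop d h f a \<partial>lborel) =
         (\<integral>\<^sup>+x. ennreal (nd d x * indicator {h..} x * f x) * Kop d h g x \<partial>lborel)"
proof -
  define P where "P a x = ennreal (indicator {h..} a * indicator {h..} x * g a * f x * (nd d a * rhoY d (x - a / real d)))" for a x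
  have mP: "case_prod P \<in> borel_measurable (lborel \<Otimes>\<^sub>M lborel)"
  proof -
    have "case_prod P \<in> borel_measurable (borel \<Otimes>\<^sub>M borel)"
      unfolding P_def by measurable
    then show ?thesis by (simp add: measurable_cong_sets[OF sets_lborel_pair refl])
  qed
  have L: "ennreal (nd d a * indicator {h..} a * g a) * Kop d h f a = (\<integral>\<^sup>+x. P a x \<partial>lborel)" for a
    unfolding Kop_def P_def
    by (subst nn_integral_cmult[symmetric]) (auto intro!: nn_integral_cong simp: ennreal_mult''[symmetric] fn gn indicator_def mult_ac)
  have R: "ennreal (nd d x * indicator {h..} x * f x) * Kop d h g x = (\<integral>\<^sup>+a. P a x \<partial>lborel)" for x
    unfolding Kop_def P_def
    by (subst nn_integral_cmult[symmetric]) (auto intro!: nn_integral_cong simp: ennreal_mult''[symmetric] fn gn indicator_def mult_ac gauss_sym[OF d2])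
  show ?thesis unfolding L R by (rule lborel_pair.Fubini'[OF mP, symmetric])
qed



lemma meas_Kop:
  assumes f[measurable]: "f \<in> borel_measurable borel"
  shows "(\<lambda>a. Kop d h f a) \<in> borel_measurable borel"
proof -
  have "(\<lambda>p. ennreal (indicator {h..} (snd p) * f (snd p) * rhoY d (snd p - fst p / real d))) \<in> borel_measurable (borel \<Otimes>\<^sub>M borel)"
    by measurable
  then have "(\<lambda>p. ennreal (indicator {h..} (snd p) * f (snd p) * rhoY d (snd p - fst p / real d))) \<in> borel_measurable (borel \<Otimes>\<^sub>M lborel)"
    by (simp add: measurable_cong_sets[OF sets_pair_measure_cong[OF refl sets_lborel] refl])
  from lborel.borel_measurable_nn_integral_fst[OF this] show ?thesis
    by (simp add: Kop_def)
qed

lemma measurable_Ylaw: "measurable (Ylaw d) N = measurable borel N"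
  by (rule measurable_cong_sets) simp_all

definition gam :: "nat \<Rightarrow> real \<Rightarrow> real \<Rightarrow> real \<Rightarrow> real" where
  "gam d h s b = 1 - (\<integral>Y. Fv d h s b Y \<partial>Yfield d)"

lemma gam_meas[measurable]: "d \<ge> 1 \<Longrightarrow> s > 0 \<Longrightarrow> gam d h s \<in> borel_measurable borel"
  unfolding gam_def using meas_LT by measurable

lemma gam_bounds: "d \<ge> 1 \<Longrightarrow> s > 0 \<Longrightarrow> 0 \<le> gam d h s b \<and> gam d h s b \<le> 1"
  using LT_bounds[of d s h b] by (simp add: gam_def)

lemma gam_low: "d \<ge> 1 \<Longrightarrow> b < h \<Longrightarrow> gam d h s b = 0"
  using LT_low[of d b h s] by (simp add: gam_def)

lemma Lop_gam:
  assumes d1: "d \<ge> 1" and s: "s > 0" and ha: "h \<le> a"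
  shows "Lop d h (gam d h s) a = real d * (\<integral>y. gam d h s (a / real d + y) \<partial>Ylaw d)"
proof -
  let ?g = "gam d h s"
  have mg[measurable]: "?g \<in> borel_measurable borel" using gam_meas[OF d1 s] .
  have "(LINT x:{h..}|lborel. ?g x * rhoY d (x - a / real d)) = (\<integral>x. ?g x * rhoY d (x - a / real d) \<partial>lborel)"
    unfolding set_lebesgue_integral_def
    by (rule Bochner_Integration.integral_cong) (auto simp: indicator_def gam_low[OF d1])
  also have "\<dots> = \<bar>1\<bar> *\<^sub>R (\<integral>y. ?g (a / real d + 1 * y) * rhoY d (a / real d + 1 * y - a / real d) \<partial>lborel)"
    by (rule lborel_integral_real_affine) simp
  also have "\<dots> = (\<integral>y. rhoY d y *\<^sub>R ?g (a / real d + y) \<partial>lborel)"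
    by (simp add: mult.commute)
  also have "\<dots> = (\<integral>y. ?g (a / real d + y) \<partial>density lborel (rhoY d))"
    by (rule integral_density[symmetric]) auto
  also have "\<dots> = (\<integral>y. ?g (a / real d + y) \<partial>Ylaw d)"
    by (simp add: Ylaw_def rhoY_def)
  finally show ?thesis using ha by (simp add: Lop_def)
qed

lemma Lop_gam_low: "\<not> h \<le> a \<Longrightarrow> Lop d h f a = 0"
  by (simp add: Lop_def)

lemma W_bounds:
  assumes d1: "d \<ge> 1" and s: "s > 0"
  shows "0 \<le> Lop d h (gam d h s) a / real d \<and> Lop d h (gam d h s) a / real d \<le> 1"
proof (cases "h \<le> a")
  case True
  interpret Y: prob_space "Ylaw d" by (rule prob_Ylaw[OF d1])
  have mg[measurable]: "gam d h s \<in> borel_measurable borel" using gam_meas[OF d1 s] .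
  have int: "integrable (Ylaw d) (\<lambda>y. gam d h s (a / real d + y))"
  proof (rule Y.integrable_const_bound[where B=1])
    show "AE x in Ylaw d. norm (gam d h s (a / real d + x)) \<le> 1" using gam_bounds[OF d1 s] by auto
    show "(\<lambda>y. gam d h s (a / real d + y)) \<in> borel_measurable (Ylaw d)"
      unfolding measurable_Ylaw by measurable
  qed
  have "(\<integral>y. gam d h s (a / real d + y) \<partial>Ylaw d) \<le> (\<integral>y. 1 \<partial>Ylaw d)"
    by (rule integral_mono[OF int]) (use gam_bounds[OF d1 s] in auto)
  moreover have "0 \<le> (\<integral>y. gam d h s (a / real d + y) \<partial>Ylaw d)"
    by (rule integral_nonneg_AE) (use gam_bounds[OF d1 s] in auto)
  ultimately show ?thesis using True d1 by (simp add: Lop_gam[OF d1 s True] Ylaw_UNIV[OF d1])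
next
  case False then show ?thesis by (simp add: Lop_def)
qed

lemma poly_ineq:
  fixes w :: real
  assumes "2 \<le> d" "0 \<le> w" "w \<le> 1"
  shows "1 - real d * w + w\<^sup>2 \<le> (1 - w) ^ d"
  using assms(1)
proof (induction d rule: dec_induct)
  case base
  then show ?case by (simp add: power2_eq_square algebra_simps)
next
  case (step n)
  have "(1 - real n * w + w\<^sup>2) * (1 - w) \<le> (1 - w) ^ n * (1 - w)"
    using step.IH assms by (intro mult_right_mono) auto
  moreover have "1 - real (Suc n) * w + w\<^sup>2 \<le> (1 - real n * w + w\<^sup>2) * (1 - w)"
  proof -
    have "w ^ 3 \<le> real n * w\<^sup>2"
    proof -
      have "w ^ 3 = w * w\<^sup>2" by (simp add: power2_eq_square power3_eq_cube)
      also have "\<dots> \<le> real n * w\<^sup>2" using assms step.hyps by (intro mult_right_mono) auto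
      finally show ?thesis .
    qed
    then show ?thesis by (simp add: algebra_simps power2_eq_square power3_eq_cube)
  qed
  ultimately show ?case by (simp add: mult.commute)
qed

lemma pointwise_ineq:
  assumes d2: "d \<ge> 2" and s: "s > 0"
  shows "gam d h s a \<le> s + real d * (Lop d h (gam d h s) a / real d) - (Lop d h (gam d h s) a / real d)\<^sup>2"
proof (cases "h \<le> a")
  case False
  then show ?thesis using d2 s by (simp add: gam_low Lop_def)
next
  case True
  have d1: "d \<ge> 1" using d2 by simp
  interpret Y: prob_space "Ylaw d" by (rule prob_Ylaw[OF d1])
  define V where "V = (\<integral>y. (\<integral>Y. Fv d h s (a / real d + y) Y \<partial>Yfield d) \<partial>Ylaw d)"
  define W where "W = Lop d h (gam d h s) a / real d"
  have mLT[measurable]: "(\<lambda>b. \<integral>Y. Fv d h s b Y \<partial>Yfield d) \<in> borel_measurable borel"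
    by (rule meas_LT[OF d1 s])
  have int: "integrable (Ylaw d) (\<lambda>y. \<integral>Y. Fv d h s (a / real d + y) Y \<partial>Yfield d)"
  proof (rule Y.integrable_const_bound[where B=1])
    show "AE x in Ylaw d. norm (\<integral>Y. Fv d h s (a / real d + x) Y \<partial>Yfield d) \<le> 1"
      using LT_bounds[OF d1 s] by auto
    show "(\<lambda>y. \<integral>Y. Fv d h s (a / real d + y) Y \<partial>Yfield d) \<in> borel_measurable (Ylaw d)"
      unfolding measurable_Ylaw by measurable
  qed
  have WV: "W = 1 - V"
    unfolding W_def V_def Lop_gam[OF d1 s True] gam_def
    using d1 int by (simp add: Ylaw_UNIV[OF d1])
  have Wb: "0 \<le> W" "W \<le> 1" using W_bounds[OF d1 s, of h a] by (simp_all add: W_def)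
  have g: "gam d h s a = 1 - exp (- s) * (1 - W) ^ d"
    unfolding gam_def LT_rec[OF d1 s True] WV V_def by simp
  have p: "1 - real d * W + W\<^sup>2 \<le> (1 - W) ^ d" by (rule poly_ineq) (use d2 Wb in auto)
  have p1: "(1 - W) ^ d \<le> 1" "0 \<le> (1 - W) ^ d" using Wb by (simp_all add: power_le_one)
  have e: "1 - s \<le> exp (- s)" using exp_ge_add_one_self[of "- s"] by simp
  have "(1 - s) * (1 - W) ^ d \<le> exp (- s) * (1 - W) ^ d"
    using e p1 by (intro mult_right_mono) auto
  then have "gam d h s a \<le> 1 - (1 - s) * (1 - W) ^ d" unfolding g by simp
  also have "\<dots> = 1 - (1 - W) ^ d + s * (1 - W) ^ d" by (simp add: algebra_simps)
  also have "\<dots> \<le> 1 - (1 - W) ^ d + s" using p1 s by (simp add: mult_left_le)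
  also have "\<dots> \<le> s + real d * W - W\<^sup>2" using p by simp
  finally show ?thesis using d1 by (simp add: W_def)
qed



lemma measurable_nu: "measurable (nu d) N = measurable borel N"
  by (rule measurable_cong_sets) (simp_all add: nu_def)

lemma space_nu[simp]: "space (nu d) = UNIV"
  by (simp add: nu_def)

lemma nn_nu:
  assumes G[measurable]: "G \<in> borel_measurable borel" and Gn: "\<And>x. 0 \<le> G x"
  shows "(\<integral>\<^sup>+x. ennreal (G x) \<partial>nu d) = (\<integral>\<^sup>+x. ennreal (nd d x * G x) \<partial>lborel)"
  unfolding nu_nd
  by (subst nn_integral_density) (auto intro!: nn_integral_cong simp: ennreal_mult'' Gn)

lemma integrable_nu_bound:
  fixes chi B :: "real \<Rightarrow> real"
  assumes chi: "integrable (nu d) chi" and B[measurable]: "B \<in> borel_measurable borel"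
    and chim[measurable]: "chi \<in> borel_measurable borel"
    and Bb: "\<And>x. \<bar>B x\<bar> \<le> 1"
  shows "integrable (nu d) (\<lambda>x. B x * chi x)"
proof (rule Bochner_Integration.integrable_bound[OF chi])
  show "(\<lambda>x. B x * chi x) \<in> borel_measurable (nu d)" unfolding measurable_nu by measurable
  show "AE x in nu d. norm (B x * chi x) \<le> norm (chi x)"
    using Bb by (auto simp: abs_mult intro!: mult_left_le_one_le)
qed

lemma meas_Lop:
  assumes f[measurable]: "f \<in> borel_measurable borel" and fn: "\<And>x. 0 \<le> f x"
  shows "Lop d h f \<in> borel_measurable borel"
proof -
  have "Lop d h f = (\<lambda>a. if h \<le> a then real d * enn2real (Kop d h f a) else 0)"
    using Lop_K[OF f fn] by (intro ext) simp
  moreover have "(\<lambda>a. if h \<le> a then real d * enn2real (Kop d h f a) else 0) \<in> borel_measurable borel"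
    using meas_Kop[OF f] by measurable
  ultimately show ?thesis by simp
qed

lemma selfadj:
  assumes d2: "d \<ge> 2" and s: "s > 0"
    and chim[measurable]: "chi \<in> borel_measurable borel" and chin: "\<And>x. 0 \<le> chi x"
    and chii: "integrable (nu d) chi"
    and eig: "AE a in nu d. Lop d h chi a = chi a"
  shows "(\<integral>a. (Lop d h (gam d h s) a / real d) * chi a \<partial>nu d) = (\<integral>a. gam d h s a * chi a \<partial>nu d) / real d"
proof -
  have d1: "d \<ge> 1" using d2 by simp
  have dpos: "real d > 0" using d2 by simp
  have dge1: "1 \<le> real d" using d2 by simp
  define g where "g = gam d h s"
  define W where "W a = Lop d h g a / real d" for a
  have gm[measurable]: "g \<in> borel_measurable borel" unfolding g_def by (rule gam_meas[OF d1 s])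
  have gb: "0 \<le> g x" "g x \<le> 1" for x using gam_bounds[OF d1 s] by (auto simp: g_def)
  have Wm[measurable]: "W \<in> borel_measurable borel"
    unfolding W_def using meas_Lop[OF gm gb(1)] by measurable
  have Wb: "0 \<le> W x" "W x \<le> 1" for x using W_bounds[OF d1 s, of h x] by (auto simp: W_def g_def)
  have ndpos: "0 < nd d x" for x by (rule nd_pos[OF d2])
  have A: "ennreal (nd d a * indicator {h..} a * chi a) * Kop d h g a = ennreal (nd d a * (W a * chi a))" for a
  proof (cases "h \<le> a")
    case True
    have K1: "Kop d h g a \<le> 1" by (rule Kop_le1[OF d1]) (use gb in auto)
    then have "Kop d h g a \<noteq> \<top>"
      by (metis ennreal_one_neq_top top.extremum_uniqueI)
    then have Kf: "Kop d h g a = ennreal (enn2real (Kop d h g a))"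
      by (simp add: ennreal_enn2real_if)
    have "W a = enn2real (Kop d h g a)"
      unfolding W_def Lop_K[OF gm gb(1)] using True dpos by simp
    then have "Kop d h g a = ennreal (W a)" using Kf by simp
    then show ?thesis using True Wb chin ndpos
      by (simp add: ennreal_mult''[symmetric] mult_ac)
  next
    case False
    then show ?thesis by (simp add: W_def Lop_def)
  qed
  have WXi: "integrable (nu d) (\<lambda>x. W x * chi x)"
    by (rule integrable_nu_bound[OF chii Wm chim]) (use Wb in auto)
  have gXi: "integrable (nu d) (\<lambda>x. g x * chi x / real d)"
  proof -
    have "integrable (nu d) (\<lambda>x. (g x / real d) * chi x)"
      by (rule integrable_nu_bound[OF chii _ chim]) (use gb dpos in \<open>auto simp: divide_le_eq_1 intro: order_trans[OF _ dge1]\<close>)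
    then show ?thesis by (simp add: mult_ac)
  qed
  have LHS: "(\<integral>\<^sup>+a. ennreal (nd d a * indicator {h..} a * chi a) * Kop d h g a \<partial>lborel) =
      ennreal (\<integral>a. W a * chi a \<partial>nu d)"
  proof -
    have "(\<integral>\<^sup>+a. ennreal (nd d a * indicator {h..} a * chi a) * Kop d h g a \<partial>lborel) =
        (\<integral>\<^sup>+a. ennreal (nd d a * (W a * chi a)) \<partial>lborel)"
      unfolding A ..
    also have "\<dots> = (\<integral>\<^sup>+a. ennreal (W a * chi a) \<partial>nu d)"
      by (rule nn_nu[symmetric]) (use Wb chin in auto)
    also have "\<dots> = ennreal (\<integral>a. W a * chi a \<partial>nu d)"
      by (rule nn_integral_eq_integral[OF WXi]) (use Wb chin in auto)
    finally show ?thesis .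
  qed
  have chi_fin: "(\<integral>\<^sup>+x. ennreal (nd d x * chi x) \<partial>lborel) \<noteq> \<infinity>"
  proof -
    have "(\<integral>\<^sup>+x. ennreal (nd d x * chi x) \<partial>lborel) = (\<integral>\<^sup>+x. ennreal (chi x) \<partial>nu d)"
      by (rule nn_nu[symmetric]) (use chin in auto)
    also have "\<dots> = ennreal (\<integral>x. chi x \<partial>nu d)"
      by (rule nn_integral_eq_integral[OF chii]) (use chin in auto)
    finally show ?thesis by simp
  qed
  have T1: "(\<integral>\<^sup>+a. ennreal (nd d a * indicator {h..} a * 1) * Kop d h chi a \<partial>lborel) =
      (\<integral>\<^sup>+x. ennreal (nd d x * indicator {h..} x * chi x) * Kop d h (\<lambda>_. 1) x \<partial>lborel)"
    by (rule tonelli_sym[OF d2 chim]) (use chin in auto)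
  also have "\<dots> \<le> (\<integral>\<^sup>+x. ennreal (nd d x * chi x) \<partial>lborel)"
  proof (rule nn_integral_mono)
    fix x
    have "Kop d h (\<lambda>_. 1) x \<le> 1" by (rule Kop_le1[OF d1]) auto
    moreover have "ennreal (nd d x * indicator {h..} x * chi x) \<le> ennreal (nd d x * chi x)"
      using ndpos[of x] chin[of x] by (intro ennreal_leI) (auto simp: indicator_def)
    ultimately show "ennreal (nd d x * indicator {h..} x * chi x) * Kop d h (\<lambda>_. 1) x \<le> ennreal (nd d x * chi x)"
      using mult_mono[of "ennreal (nd d x * indicator {h..} x * chi x)" "ennreal (nd d x * chi x)" "Kop d h (\<lambda>_. 1) x" 1]
      by simp
  qed
  finally have T1fin: "(\<integral>\<^sup>+a. ennreal (nd d a * indicator {h..} a * 1) * Kop d h chi a \<partial>lborel) \<noteq> \<infinity>"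
    using chi_fin by (auto simp: top_unique)
  have KXm: "(\<lambda>a. ennreal (nd d a * indicator {h..} a * 1) * Kop d h chi a) \<in> borel_measurable lborel"
    using meas_Kop[OF chim] by simp
  have AEfin: "AE a in lborel. ennreal (nd d a * indicator {h..} a * 1) * Kop d h chi a \<noteq> \<infinity>"
    by (rule nn_integral_PInf_AE[OF KXm T1fin])
  have eigL: "AE a in lborel. Lop d h chi a = chi a"
  proof -
    have "AE a in lborel. 0 < ennreal (nd d a) \<longrightarrow> Lop d h chi a = chi a"
      using eig unfolding nu_nd by (subst (asm) AE_density) auto
    then show ?thesis using ndpos by (auto elim: AE_mp)
  qed
  have E: "AE x in lborel. ennreal (nd d x * indicator {h..} x * g x) * Kop d h chi x = ennreal (nd d x * (g x * chi x / real d))"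
    using AEfin eigL
  proof eventually_elim
    case (elim x)
    show ?case
    proof (cases "h \<le> x")
      case True
      have fin: "Kop d h chi x \<noteq> \<infinity>" using elim(1) True ndpos[of x] by (auto simp: ennreal_mult_eq_top_iff)
      have "chi x = real d * enn2real (Kop d h chi x)"
        using elim(2) Lop_K[OF chim chin, of d h x] True by simp
      then have "Kop d h chi x = ennreal (chi x / real d)"
        using fin dpos by (simp add: ennreal_enn2real_if)
      then show ?thesis using True gb ndpos[of x] chin[of x] dpos
        by (simp add: ennreal_mult''[symmetric] mult_ac)
    next
      case False
      then show ?thesis by (simp add: g_def gam_low[OF d1])
    qed
  qed
  have RHS: "(\<integral>\<^sup>+x. ennreal (nd d x * indicator {h..} x * g x) * Kop d h chi x \<partial>lborel) =
      ennreal (\<integral>x. g x * chi x / real d \<partial>nu d)"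
  proof -
    have "(\<integral>\<^sup>+x. ennreal (nd d x * indicator {h..} x * g x) * Kop d h chi x \<partial>lborel) =
        (\<integral>\<^sup>+x. ennreal (nd d x * (g x * chi x / real d)) \<partial>lborel)"
      by (rule nn_integral_cong_AE[OF E])
    also have "\<dots> = (\<integral>\<^sup>+x. ennreal (g x * chi x / real d) \<partial>nu d)"
      by (rule nn_nu[symmetric]) (use gb chin dpos in auto)
    also have "\<dots> = ennreal (\<integral>x. g x * chi x / real d \<partial>nu d)"
      by (rule nn_integral_eq_integral[OF gXi]) (use gb chin dpos in auto)
    finally show ?thesis .
  qed
  have T2: "(\<integral>\<^sup>+a. ennreal (nd d a * indicator {h..} a * chi a) * Kop d h g a \<partial>lborel) =
      (\<integral>\<^sup>+x. ennreal (nd d x * indicator {h..} x * g x) * Kop d h chi x \<partial>lborel)"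
    by (rule tonelli_sym[OF d2 gm chim]) (use gb chin in auto)
  have "ennreal (\<integral>a. W a * chi a \<partial>nu d) = ennreal (\<integral>x. g x * chi x / real d \<partial>nu d)"
    using T2 unfolding LHS RHS .
  moreover have "0 \<le> (\<integral>a. W a * chi a \<partial>nu d)" by (rule integral_nonneg_AE) (use Wb chin in auto)
  moreover have "0 \<le> (\<integral>x. g x * chi x / real d \<partial>nu d)" by (rule integral_nonneg_AE) (use gb chin dpos in auto)
  ultimately have "(\<integral>a. W a * chi a \<partial>nu d) = (\<integral>x. g x * chi x / real d \<partial>nu d)" by simp
  then show ?thesis by (simp add: W_def g_def)
qed



lemma abs_le_one_plus_sq: "\<bar>x::real\<bar> \<le> 1 + x\<^sup>2"
proof -
  have "0 \<le> (\<bar>x\<bar> - 1)\<^sup>2" by simp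
  also have "(\<bar>x\<bar> - 1)\<^sup>2 = x\<^sup>2 - 2 * \<bar>x\<bar> + 1" by (simp add: power2_eq_square algebra_simps)
  finally show ?thesis by simp
qed

lemma cs_weighted:
  fixes W chi :: "real \<Rightarrow> real"
  assumes Wm[measurable]: "W \<in> borel_measurable borel" and chim[measurable]: "chi \<in> borel_measurable borel"
    and Wb: "\<And>x. 0 \<le> W x" "\<And>x. W x \<le> 1" and chin: "\<And>x. 0 \<le> chi x"
    and chii: "integrable (nu d) chi"
  shows "(\<integral>a. W a * chi a \<partial>nu d)\<^sup>2 \<le> (\<integral>a. (W a)\<^sup>2 * chi a \<partial>nu d) * (\<integral>a. chi a \<partial>nu d)"
proof -
  define B where "B = (\<integral>a. W a * chi a \<partial>nu d)"
  define A where "A = (\<integral>a. (W a)\<^sup>2 * chi a \<partial>nu d)"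
  define M where "M = (\<integral>a. chi a \<partial>nu d)"
  have i1: "integrable (nu d) (\<lambda>a. W a * chi a)"
    by (rule integrable_nu_bound[OF chii Wm chim]) (use Wb in auto)
  have i2: "integrable (nu d) (\<lambda>a. (W a)\<^sup>2 * chi a)"
    by (rule integrable_nu_bound[OF chii _ chim]) (use Wb in \<open>auto simp: abs_le_iff power_le_one\<close>)
  have M0: "0 \<le> M" unfolding M_def by (rule integral_nonneg_AE) (use chin in auto)
  have B0: "0 \<le> B" unfolding B_def by (rule integral_nonneg_AE) (use Wb chin in auto)
  have A0: "0 \<le> A" unfolding A_def by (rule integral_nonneg_AE) (use Wb chin in auto)
  have BM: "B \<le> M" unfolding B_def M_def
    by (rule integral_mono[OF i1 chii]) (use Wb chin in \<open>auto intro: mult_left_le_one_le\<close>)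
  show ?thesis
  proof (cases "M = 0")
    case True
    then have "B = 0" using B0 BM by simp
    then show ?thesis using True by (simp add: B_def M_def)
  next
    case False
    then have Mp: "M > 0" using M0 by simp
    define t where "t = B / M"
    have eq: "(\<lambda>a. (W a - t)\<^sup>2 * chi a) = (\<lambda>a. ((W a)\<^sup>2 * chi a - (2 * t) * (W a * chi a)) + t\<^sup>2 * chi a)"
      by (auto simp: power2_eq_square algebra_simps)
    have "0 \<le> (\<integral>a. (W a - t)\<^sup>2 * chi a \<partial>nu d)"
      by (rule integral_nonneg_AE) (use chin in auto)
    also have "(\<integral>a. (W a - t)\<^sup>2 * chi a \<partial>nu d) = A - 2 * t * B + t\<^sup>2 * M"
      unfolding eq A_def B_def M_def using i1 i2 chii by simp
    also have "A - 2 * t * B + t\<^sup>2 * M = A - B\<^sup>2 / M"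
      using Mp by (simp add: t_def power2_eq_square field_simps)
    finally have "B\<^sup>2 / M \<le> A" by simp
    then have "B\<^sup>2 \<le> A * M" using Mp by (simp add: divide_le_eq)
    then show ?thesis by (simp add: A_def B_def M_def)
  qed
qed

lemma gamma_gam: "gamma d s = gam d (hstar d) s"
  by (intro ext) (simp add: gamma_def gam_def laplaceT_eq)

lemma main_bound:
  fixes ef :: "real \<Rightarrow> real"
  assumes d2: "d \<ge> 2" and s: "s > 0"
    and efm[measurable]: "ef \<in> borel_measurable borel"
    and efn: "\<And>a. 0 \<le> ef a"
    and efi2: "integrable (nu d) (\<lambda>a. (ef a)\<^sup>2)"
    and ef1: "(\<integral>a. (ef a)\<^sup>2 \<partial>nu d) = 1"
    and eig: "AE a in nu d. Lop d (hstar d) ef a = ef a"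
  shows "(\<integral>a. (alpha d ef s a)\<^sup>2 \<partial>nu d) \<le> ((real d)\<^sup>2 * (\<integral>a. ef a \<partial>nu d)\<^sup>2) * s"
proof -
  have d1: "d \<ge> 1" using d2 by simp
  have dpos: "real d > 0" using d2 by simp
  interpret N: prob_space "nu d" by (rule prob_nu[OF d2])
  define h where "h = hstar d"
  define g where "g = gam d h s"
  define W where "W a = Lop d h g a / real d" for a
  have gm[measurable]: "g \<in> borel_measurable borel" unfolding g_def by (rule gam_meas[OF d1 s])
  have gb: "0 \<le> g x" "g x \<le> 1" for x using gam_bounds[OF d1 s] by (auto simp: g_def)
  have Wm[measurable]: "W \<in> borel_measurable borel"
    unfolding W_def using meas_Lop[OF gm gb(1)] by measurable
  have Wb: "0 \<le> W x" "W x \<le> 1" for x using W_bounds[OF d1 s, of h x] by (auto simp: W_def g_def)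
  have chii: "integrable (nu d) ef"
  proof (rule Bochner_Integration.integrable_bound)
    show "integrable (nu d) (\<lambda>x. 1 + (ef x)\<^sup>2)" using efi2 by simp
    show "ef \<in> borel_measurable (nu d)" unfolding measurable_nu by measurable
    show "AE x in nu d. norm (ef x) \<le> norm (1 + (ef x)\<^sup>2)"
      using abs_le_one_plus_sq by auto
  qed
  define I where "I = (\<integral>a. g a * ef a \<partial>nu d)"
  define B where "B = (\<integral>a. W a * ef a \<partial>nu d)"
  define A where "A = (\<integral>a. (W a)\<^sup>2 * ef a \<partial>nu d)"
  define M where "M = (\<integral>a. ef a \<partial>nu d)"
  have a1I: "a1 d ef s = I" by (simp add: a1_def I_def g_def h_def gamma_gam)
  have alpha2: "(\<integral>a. (alpha d ef s a)\<^sup>2 \<partial>nu d) = I\<^sup>2"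
    using ef1 by (simp add: alpha_def a1I power_mult_distrib)
  have BI: "B = I / real d"
    unfolding B_def I_def W_def g_def h_def
    by (rule selfadj[OF d2 s efm efn chii]) (use eig in \<open>simp add: h_def\<close>)
  have i1: "integrable (nu d) (\<lambda>a. W a * ef a)"
    by (rule integrable_nu_bound[OF chii Wm efm]) (use Wb in auto)
  have i2: "integrable (nu d) (\<lambda>a. (W a)\<^sup>2 * ef a)"
    by (rule integrable_nu_bound[OF chii _ efm]) (use Wb in \<open>auto simp: abs_le_iff power_le_one\<close>)
  have i3: "integrable (nu d) (\<lambda>a. g a * ef a)"
    by (rule integrable_nu_bound[OF chii gm efm]) (use gb in auto)
  have pw: "g a * ef a \<le> s * ef a + real d * (W a * ef a) - (W a)\<^sup>2 * ef a" for a
  proof -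
    have "g a \<le> s + real d * W a - (W a)\<^sup>2"
      using pointwise_ineq[OF d2 s, of h a] dpos by (simp add: W_def g_def)
    then have "g a * ef a \<le> (s + real d * W a - (W a)\<^sup>2) * ef a"
      using efn by (intro mult_right_mono) auto
    then show ?thesis by (simp add: algebra_simps)
  qed
  have "I \<le> (\<integral>a. s * ef a + real d * (W a * ef a) - (W a)\<^sup>2 * ef a \<partial>nu d)"
    unfolding I_def by (rule integral_mono[OF i3]) (use i1 i2 chii pw in auto)
  also have "\<dots> = s * M + real d * B - A"
    unfolding M_def B_def A_def using i1 i2 chii by simp
  finally have "I \<le> s * M + real d * B - A" .
  then have AM: "A \<le> s * M" using BI dpos by simp
  have CS: "B\<^sup>2 \<le> A * M"
    unfolding A_def B_def M_def by (rule cs_weighted[OF Wm efm Wb efn chii])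
  have M0: "0 \<le> M" unfolding M_def by (rule integral_nonneg_AE) (use efn in auto)
  have "I\<^sup>2 = (real d)\<^sup>2 * B\<^sup>2" using BI dpos by (simp add: power2_eq_square field_simps)
  also have "\<dots> \<le> (real d)\<^sup>2 * (A * M)" using CS by (intro mult_left_mono) auto
  also have "\<dots> \<le> (real d)\<^sup>2 * (s * M * M)"
    using AM M0 by (intro mult_left_mono mult_right_mono) auto
  also have "\<dots> = ((real d)\<^sup>2 * M\<^sup>2) * s" by (simp add: power2_eq_square)
  finally show ?thesis unfolding alpha2 M_def .
qed

theorem lemma5p4:
  fixes d :: nat and ef :: "real \<Rightarrow> real"
  assumes "d \<ge> 2"
    and "ef \<in> borel_measurable borel"
    and "\<forall>a. 0 \<le> ef a"
    and "integrable (nu d) (\<lambda>a. (ef a)\<^sup>2)"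
    and "(\<integral>a. (ef a)\<^sup>2 \<partial>nu d) = 1"
    and "AE a in nu d. Lop d (hstar d) ef a = ef a"
  shows "\<exists>c::real. \<forall>\<^sub>F s in at_right 0. (\<integral>a. (alpha d ef s a)\<^sup>2 \<partial>nu d) \<le> c * s"
proof (intro exI)
  show "\<forall>\<^sub>F s in at_right 0. (\<integral>a. (alpha d ef s a)\<^sup>2 \<partial>nu d) \<le> ((real d)\<^sup>2 * (\<integral>a. ef a \<partial>nu d)\<^sup>2) * s"
    unfolding eventually_at_right_field
  proof (intro exI conjI allI impI)
    show "(0::real) < 1" by simp
    fix s :: real assume "0 < s"
    then show "(\<integral>a. (alpha d ef s a)\<^sup>2 \<partial>nu d) \<le> ((real d)\<^sup>2 * (\<integral>a. ef a \<partial>nu d)\<^sup>2) * s"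
      using assms by (intro main_bound) auto
  qed
qed

end
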